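(* Let $L$ be a finite-dimensional Lie superalgebra, let $(K,\lambda)\in C(L)$, let $M$ be any Lie superalgebra and $\sigma\in\mathrm{Hom}(M,L)$ surjective. If $\tau\in\mathrm{Hom}(M,K)$ satisfies $\lambda\circ\tau=\sigma$, then $\tau$ is surjective.
   Context: Lie superalgebras over a field of characteristic $\neq 2,3$; $\mathrm{Hom}(A,B)$ denotes Lie superalgebra homomorphisms (even, bracket-preserving). $Z(K)$ is the center, $K'=[K,K]$. $C(L)$ is the class of pairs $(K,\lambda)$, $K$ a Lie superalgebra, $\lambda\in\mathrm{Hom}(K,L)$ surjective with $\mathrm{Ker}(\lambda)\subseteq K'\cap Z(K)$. *)

theory Defs
  imports Complex_Main
begin

text \<open>A Lie superalgebra over a field 'k, whose underlying vector space is the whole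
  type 'v (with scalar multiplication scl), graded as V = ev + od (direct sum),
  with a bracket br.\<close>

record ('k, 'v) lsa =
  scl :: "'k \<Rightarrow> 'v \<Rightarrow> 'v"
  ev  :: "'v set"
  od  :: "'v set"
  br  :: "'v \<Rightarrow> 'v \<Rightarrow> 'v"

definition homog :: "('k, 'v) lsa \<Rightarrow> 'v \<Rightarrow> bool" where
  "homog A x \<longleftrightarrow> x \<in> ev A \<or> x \<in> od A"

text \<open>the sign (-1)^(|x||y|) for homogeneous x, y (the value at 0 is irrelevant)\<close>
definition psign :: "('k::field, 'v) lsa \<Rightarrow> 'v \<Rightarrow> 'v \<Rightarrow> 'k" where
  "psign A x y = (if x \<in> od A \<and> y \<in> od A then -1 else 1)"

definition lie_superalgebra :: "('k::field, 'v::ab_group_add) lsa \<Rightarrow> bool" where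
  "lie_superalgebra A \<longleftrightarrow>
     vector_space (scl A) \<and>
     module.subspace (scl A) (ev A) \<and> module.subspace (scl A) (od A) \<and>
     ev A \<inter> od A = {0} \<and>
     (\<forall>v. \<exists>a b. a \<in> ev A \<and> b \<in> od A \<and> v = a + b) \<and>
     (\<forall>x. Vector_Spaces.linear (scl A) (scl A) (br A x)) \<and>
     (\<forall>y. Vector_Spaces.linear (scl A) (scl A) (\<lambda>x. br A x y)) \<and>
     (\<forall>x\<in>ev A. \<forall>y\<in>ev A. br A x y \<in> ev A) \<and>
     (\<forall>x\<in>ev A. \<forall>y\<in>od A. br A x y \<in> od A) \<and>
     (\<forall>x\<in>od A. \<forall>y\<in>ev A. br A x y \<in> od A) \<and>
     (\<forall>x\<in>od A. \<forall>y\<in>od A. br A x y \<in> ev A) \<and>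
     (\<forall>x y. homog A x \<longrightarrow> homog A y \<longrightarrow>
        br A x y = - scl A (psign A x y) (br A y x)) \<and>
     (\<forall>x y z. homog A x \<longrightarrow> homog A y \<longrightarrow> homog A z \<longrightarrow>
        br A x (br A y z) = br A (br A x y) z + scl A (psign A x y) (br A y (br A x z)))"

definition fin_dim_lsa :: "('k::field, 'v::ab_group_add) lsa \<Rightarrow> bool" where
  "fin_dim_lsa A \<longleftrightarrow> (\<exists>B. finite B \<and> module.span (scl A) B = UNIV)"

definition lsa_hom :: "('k::field, 'a::ab_group_add) lsa \<Rightarrow> ('k, 'b::ab_group_add) lsa
    \<Rightarrow> ('a \<Rightarrow> 'b) set" where
  "lsa_hom A B = {f. Vector_Spaces.linear (scl A) (scl B) f \<and>
      f ` ev A \<subseteq> ev B \<and> f ` od A \<subseteq> od B \<and>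
      (\<forall>x y. f (br A x y) = br B (f x) (f y))}"

definition center :: "('k, 'v::zero) lsa \<Rightarrow> 'v set" where
  "center A = {z. \<forall>x. br A z x = 0 \<and> br A x z = 0}"

definition derived :: "('k::field, 'v::ab_group_add) lsa \<Rightarrow> 'v set" where
  "derived A = module.span (scl A) {br A x y | x y. True}"

definition class_C :: "('k::field, 'l::ab_group_add) lsa \<Rightarrow> ('k, 'a::ab_group_add) lsa
    \<Rightarrow> ('a \<Rightarrow> 'l) \<Rightarrow> bool" where
  "class_C L K lam \<longleftrightarrow> lie_superalgebra K \<and> lam \<in> lsa_hom K L \<and> surj lam \<and>
     {x. lam x = 0} \<subseteq> derived K \<inter> center K"

end

theory Submission
  imports Defs
begin

theorem lemma4p2:
  fixes L :: "('k::field, 'l::ab_group_add) lsa"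
    and K :: "('k, 'a::ab_group_add) lsa"
    and M :: "('k, 'm::ab_group_add) lsa"
  assumes "(2::'k) \<noteq> 0" and "(3::'k) \<noteq> 0"
    and "lie_superalgebra L" and "fin_dim_lsa L"
    and "class_C L K lam"
    and "lie_superalgebra M"
    and "sigma \<in> lsa_hom M L" and "surj sigma"
    and "tau \<in> lsa_hom M K" and "lam \<circ> tau = sigma"
  shows "surj tau"
proof -
  have K: "lie_superalgebra K" and lam: "lam \<in> lsa_hom K L"
    and ker: "{x. lam x = 0} \<subseteq> derived K \<inter> center K"
    using assms(5) unfolding class_C_def by auto
  have taul: "Vector_Spaces.linear (scl M) (scl K) tau"
    and taub: "\<And>x y. tau (br M x y) = br K (tau x) (tau y)"
    using assms(9) unfolding lsa_hom_def by auto
  have lamadd: "\<And>x y. lam (x + y) = lam x + lam y"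
    using lam unfolding lsa_hom_def by (auto simp: Vector_Spaces.linear_iff)
  have tauadd: "\<And>x y. tau (x + y) = tau x + tau y"
    and tausc: "\<And>c x. tau (scl M c x) = scl K c (tau x)"
    and vsK: "vector_space (scl K)"
    using taul by (auto simp: Vector_Spaces.linear_iff)
  have bl: "\<And>x y z. br K x (y + z) = br K x y + br K x z"
    using K unfolding lie_superalgebra_def by (auto simp: Vector_Spaces.linear_iff)
  have br': "\<And>x y z. br K (y + z) x = br K y x + br K z x"
  proof -
    fix x y z
    have "Vector_Spaces.linear (scl K) (scl K) (\<lambda>w. br K w x)"
      using K unfolding lie_superalgebra_def by auto
    then show "br K (y + z) x = br K y x + br K z x" by (auto simp: Vector_Spaces.linear_iff)
  qed
  have lamdiff: "\<And>x y. lam (x - y) = lam x - lam y"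
    by (metis add_diff_cancel diff_add_cancel lamadd)
  have decomp: "\<And>k. \<exists>m. k - tau m \<in> center K \<and> k - tau m \<in> derived K"
  proof -
    fix k
    obtain m where "sigma m = lam k" using assms(8) by (metis surjD)
    then have "lam (k - tau m) = 0" using assms(10) lamdiff
      by (metis comp_apply right_minus_eq)
    then show "\<exists>m. k - tau m \<in> center K \<and> k - tau m \<in> derived K" using ker by blast
  qed
  have brin: "\<And>x y. br K x y \<in> range tau"
  proof -
    fix x y
    obtain a where a: "x - tau a \<in> center K" using decomp by blast
    obtain b where b: "y - tau b \<in> center K" using decomp by blast
    define z1 where "z1 = x - tau a"
    define z2 where "z2 = y - tau b"
    have x: "x = tau a + z1" and y: "y = tau b + z2" unfolding z1_def z2_def by auto
    have "br K x y = br K (tau a) (tau b) + br K (tau a) z2 + (br K z1 (tau b) + br K z1 z2)"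
      unfolding x y by (simp add: bl br')
    also have "\<dots> = tau (br M a b)" using a b unfolding z1_def[symmetric] z2_def[symmetric]
      by (simp add: center_def taub)
    finally show "br K x y \<in> range tau" by simp
  qed
  have mK: "module (scl K)" using vsK unfolding vector_space_def module_def .
  have sub: "module.subspace (scl K) (range tau)"
    unfolding module.subspace_def[OF mK]
  proof (intro conjI ballI allI)
    show "0 \<in> range tau" using tauadd by (metis add_cancel_right_right rangeI)
  next
    fix x y assume "x \<in> range tau" "y \<in> range tau"
    then obtain a b where "x = tau a" "y = tau b" by blast
    then have "x + y = tau (a + b)" using tauadd by simp
    then show "x + y \<in> range tau" by simp
  next
    fix c x assume "x \<in> range tau"
    then obtain a where "x = tau a" by blast
    then have "scl K c x = tau (scl M c a)" using tausc by simp
    then show "scl K c x \<in> range tau" by simp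
  qed
  have der: "derived K \<subseteq> range tau"
    unfolding derived_def
    by (rule module.span_minimal[OF mK _ sub]) (use brin in blast)
  show ?thesis
  proof -
    have "k \<in> range tau" for k
    proof -
      obtain m where "k - tau m \<in> derived K" using decomp by blast
      then obtain m' where "k - tau m = tau m'" using der by blast
      then have "k = tau (m + m')" by (simp add: tauadd algebra_simps)
      then show ?thesis by simp
    qed
    then show ?thesis by blast
  qed
qed

end
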